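(* Let $X$ be a finite set of nodes of the triangular grid with $G_X$ connected and without holes. Let $P$ be an $x$-portal dividing $X$ into sides $A$ and $B$, let $S\subseteq A\cup P$ be non-empty, and let $u\in B'=B\cap\mathrm{vis}(P)$ with $\Delta_u\subseteq X$. Then $n_z(u)$ is a feasible parent of $u$ if $\mathrm{dist}(S,\pi_z(u))\le\mathrm{dist}(S,\pi_y(u))$, and $n_y(u)$ is a feasible parent of $u$ if $\mathrm{dist}(S,\pi_z(u))\ge\mathrm{dist}(S,\pi_y(u))$.
   Context: $G_\Delta=(V_\Delta,E_\Delta)$ is the infinite regular triangular grid graph, with edges parallel to three axes: $x$ (west–east), $y$, $z$. $G_X$ is the subgraph induced by $X$; $X$ has no holes if the subgraph induced by $V_\Delta\setminus X$ is connected. $\mathrm{dist}$ is the distance in $G_X$ and $\mathrm{dist}(S,v)=\min_{s\in S}\mathrm{dist}(s,v)$. For an axis $d$, the $d$-portals are the vertex sets of the connected components of $(X,E_d)$, $E_d$ being the edges of $G_X$ parallel to $d$; $\mathrm{portal}_d(u)$ is the $d$-portal containing $u$. For the $x$-portal $P$ (a horizontal segment), $A$ is the union of the components of the subgraph induced by $X\setminus P$ that contain a node adjacent to $P$ on one side (half-plane) of the line through $P$, and $B=X\setminus(P\cup A)$. An amoebot $v$ is visible by $w$ if $v\in\mathrm{portal}_x(w)\cup\mathrm{portal}_y(w)\cup\mathrm{portal}_z(w)$; $\mathrm{vis}(P)=\bigcup_{w\in P}(\mathrm{portal}_x(w)\cup\mathrm{portal}_y(w)\cup\mathrm{portal}_z(w))$.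 For $u\in B'$, $\pi_y(u),\pi_z(u)\in V_\Delta$ are the projections of $u$ along the $y$- and $z$-axis onto the line through $P$; $\Delta_u$ is the set of nodes of $V_\Delta$ in the (closed) triangle with corners $u,\pi_y(u),\pi_z(u)$; $n_y(u),n_z(u)\in V_\Delta$ are the neighbors of $u$ in the direction of $\pi_y(u)$ and $\pi_z(u)$, respectively. A neighbor $v\in X$ of $u$ is a feasible parent of $u$ (with respect to $S$) if $\mathrm{dist}(S,u)=\mathrm{dist}(S,v)+1$. *)

theory Defs
  imports Main
begin

text \<open>Nodes of the triangular grid in axial coordinates: (a,b) is the point
 a*e_x + b*e_y with e_x = (1,0) (west-east) and e_y = (1/2, sqrt 3/2).\<close>

type_synonym node = "int \<times> int"

datatype axis = AxX | AxY | AxZ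

fun dvec :: "axis \<Rightarrow> node" where
  "dvec AxX = (1, 0)"
| "dvec AxY = (0, 1)"
| "dvec AxZ = (-1, 1)"

definition nplus :: "node \<Rightarrow> node \<Rightarrow> node" where
  "nplus u w = (fst u + fst w, snd u + snd w)"

definition adj_ax :: "axis \<Rightarrow> node \<Rightarrow> node \<Rightarrow> bool" where
  "adj_ax d u v \<longleftrightarrow> v = nplus u (dvec d) \<or> u = nplus v (dvec d)"

definition grid_adj :: "node \<Rightarrow> node \<Rightarrow> bool" where
  "grid_adj u v \<longleftrightarrow> (\<exists>d. adj_ax d u v)"

definition adj_in :: "node set \<Rightarrow> node \<Rightarrow> node \<Rightarrow> bool" where
  "adj_in Y u v \<longleftrightarrow> u \<in> Y \<and> v \<in> Y \<and> grid_adj u v"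

definition connected_set :: "node set \<Rightarrow> bool" where
  "connected_set Y \<longleftrightarrow> (\<forall>p\<in>Y. \<forall>q\<in>Y. (adj_in Y)\<^sup>*\<^sup>* p q)"

definition no_holes :: "node set \<Rightarrow> bool" where
  "no_holes X \<longleftrightarrow> connected_set (- X)"

definition gdist :: "node set \<Rightarrow> node \<Rightarrow> node \<Rightarrow> nat" where
  "gdist X u v = (LEAST n. ((adj_in X) ^^ n) u v)"

definition gdist_set :: "node set \<Rightarrow> node set \<Rightarrow> node \<Rightarrow> nat" where
  "gdist_set X S v = Min ((\<lambda>s. gdist X s v) ` S)"

definition portal :: "node set \<Rightarrow> axis \<Rightarrow> node \<Rightarrow> node set" where
  "portal X d u = {v. (\<lambda>p q. p \<in> X \<and> q \<in> X \<and> adj_ax d p q)\<^sup>*\<^sup>* u v}"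

definition is_portal :: "node set \<Rightarrow> axis \<Rightarrow> node set \<Rightarrow> bool" where
  "is_portal X d P \<longleftrightarrow> (\<exists>w\<in>X. P = portal X d w)"

definition vis :: "node set \<Rightarrow> node set \<Rightarrow> node set" where
  "vis X P = (\<Union>w\<in>P. portal X AxX w \<union> portal X AxY w \<union> portal X AxZ w)"

text \<open>Side A of the x-portal P lying on the horizontal line b = b0, for the
 chosen half-plane sigma (sigma = 1: above, sigma = -1: below): the union of
 the components of G_{X - P} containing a node adjacent to P in that half-plane.\<close>
definition side_A :: "node set \<Rightarrow> node set \<Rightarrow> int \<Rightarrow> int \<Rightarrow> node set" where
  "side_A X P b0 \<sigma> = {v. \<exists>c\<in>X - P. (adj_in (X - P))\<^sup>*\<^sup>* c v \<and>
      (\<exists>p\<in>P. grid_adj c p) \<and> \<sigma> * (snd c - b0) > 0}"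

definition side_B :: "node set \<Rightarrow> node set \<Rightarrow> int \<Rightarrow> int \<Rightarrow> node set" where
  "side_B X P b0 \<sigma> = X - (P \<union> side_A X P b0 \<sigma>)"

definition proj_y :: "int \<Rightarrow> node \<Rightarrow> node" where
  "proj_y b0 u = (fst u, b0)"

definition proj_z :: "int \<Rightarrow> node \<Rightarrow> node" where
  "proj_z b0 u = (fst u + snd u - b0, b0)"

definition tri :: "int \<Rightarrow> node \<Rightarrow> node set" where
  "tri b0 u = {(a', b'). min b0 (snd u) \<le> b' \<and> b' \<le> max b0 (snd u) \<and>
      min (fst u) (fst u + snd u - b') \<le> a' \<and> a' \<le> max (fst u) (fst u + snd u - b')}"

definition nb_y :: "int \<Rightarrow> node \<Rightarrow> node" where
  "nb_y b0 u = (fst u, snd u + sgn (b0 - snd u))"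

definition nb_z :: "int \<Rightarrow> node \<Rightarrow> node" where
  "nb_z b0 u = (fst u - sgn (b0 - snd u), snd u + sgn (b0 - snd u))"

definition feasible_parent :: "node set \<Rightarrow> node set \<Rightarrow> node \<Rightarrow> node \<Rightarrow> bool" where
  "feasible_parent X S u v \<longleftrightarrow> v \<in> X \<and> grid_adj u v \<and>
      gdist_set X S u = gdist_set X S v + 1"

end

theory Submission imports Defs begin

definition gd2 :: "node \<Rightarrow> node \<Rightarrow> int" where
  "gd2 p q = \<bar>fst p - fst q\<bar> + \<bar>snd p - snd q\<bar> + \<bar>fst p - fst q + snd p - snd q\<bar>"

lemma abs_tri3: "\<bar>(a::int) - c\<bar> \<le> \<bar>a - b\<bar> + \<bar>b - c\<bar>" by arith

lemma gd2_tri: "gd2 p q \<le> gd2 p m + gd2 m q"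
proof -
  have 1: "\<bar>fst p - fst q\<bar> \<le> \<bar>fst p - fst m\<bar> + \<bar>fst m - fst q\<bar>" by (rule abs_tri3)
  have 2: "\<bar>snd p - snd q\<bar> \<le> \<bar>snd p - snd m\<bar> + \<bar>snd m - snd q\<bar>" by (rule abs_tri3)
  have 3: "\<bar>fst p - fst q + snd p - snd q\<bar> \<le> \<bar>fst p - fst m + snd p - snd m\<bar> + \<bar>fst m - fst q + snd m - snd q\<bar>"
    using abs_tri3[of "fst p + snd p" "fst q + snd q" "fst m + snd m"] by (simp add: algebra_simps)
  show ?thesis using 1 2 3 unfolding gd2_def by linarith
qed

lemma gd2_adj1: assumes "grid_adj m q" shows "gd2 m q = 2"
proof -
  obtain d where "adj_ax d m q" using assms grid_adj_def by blast
  then show ?thesis by (cases d) (auto simp: adj_ax_def nplus_def gd2_def)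
qed

lemma gd2_adj: assumes "grid_adj m q" shows "gd2 p q \<le> gd2 p m + 2"
  using gd2_tri[of p q m] gd2_adj1[OF assms] by simp

lemma gd2_path: "(adj_in X ^^ n) p q \<Longrightarrow> gd2 p q \<le> 2 * int n"
proof (induction n arbitrary: q)
  case 0 then show ?case by (simp add: gd2_def)
next
  case (Suc n)
  then obtain m where "(adj_in X ^^ n) p m" "adj_in X m q" by (auto elim: relpowp_Suc_E)
  then have "grid_adj m q" by (simp add: adj_in_def)
  then have "gd2 p q \<le> gd2 p m + 2" by (rule gd2_adj)
  then show ?case using Suc.IH[OF \<open>(adj_in X ^^ n) p m\<close>] by simp
qed

lemma rel_app: "(R ^^ m) a b \<Longrightarrow> (R ^^ n) b c \<Longrightarrow> (R ^^ (m + n)) a c"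
  by (auto simp: relpowp_add)

lemma gdist_le: "(adj_in X ^^ n) p q \<Longrightarrow> gdist X p q \<le> n"
  unfolding gdist_def by (rule Least_le)

lemma gdist_path: assumes "connected_set X" "p \<in> X" "q \<in> X"
  shows "(adj_in X ^^ gdist X p q) p q"
proof -
  have "\<exists>n. (adj_in X ^^ n) p q" using assms rtranclp_power connected_set_def by metis
  then show ?thesis unfolding gdist_def by (rule LeastI_ex)
qed

lemma gset_min: assumes "finite S" "s \<in> S" shows "gdist_set X S v \<le> gdist X s v"
  unfolding gdist_set_def using assms by simp

lemma gset_attain: assumes "finite S" "S \<noteq> {}" shows "\<exists>s\<in>S. gdist_set X S v = gdist X s v"
proof -
  have "gdist_set X S v \<in> (\<lambda>s. gdist X s v) ` S" unfolding gdist_set_def using assms by (intro Min_in) auto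
  then show ?thesis by auto
qed

lemma gset_step: assumes "finite S" "S \<noteq> {}" "S \<subseteq> X" "connected_set X" "v' \<in> X"
  "(adj_in X ^^ k) v' v" shows "gdist_set X S v \<le> gdist_set X S v' + k"
proof -
  obtain s where s: "s \<in> S" "gdist_set X S v' = gdist X s v'" using gset_attain assms by blast
  have "(adj_in X ^^ (gdist X s v' + k)) s v"
    using rel_app[OF gdist_path[OF assms(4) _ assms(5)] assms(6)] s assms(3) by blast
  then have "gdist X s v \<le> gdist X s v' + k" by (rule gdist_le)
  then show ?thesis using gset_min[OF assms(1) s(1), of X v] s by simp
qed

lemma portal_inv:
  assumes "(\<lambda>p q. p \<in> X \<and> q \<in> X \<and> adj_ax d p q)\<^sup>*\<^sup>* u v"
  shows "(d = AxX \<longrightarrow> snd v = snd u) \<and> (d = AxY \<longrightarrow> fst v = fst u) \<and>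
         (d = AxZ \<longrightarrow> fst v + snd v = fst u + snd u)"
  using assms
  by (induction rule: rtranclp_induct) (cases d; auto simp: adj_ax_def nplus_def)+

lemma portal_sub: "w \<in> X \<Longrightarrow> portal X d w \<subseteq> X"
  unfolding portal_def by (auto elim: rtranclp.cases)

definition betw :: "int \<Rightarrow> int \<Rightarrow> int \<Rightarrow> bool" where
  "betw x y c \<longleftrightarrow> min x y \<le> c \<and> c \<le> max x y"

lemma portal_interval:
  assumes "w \<in> X" "p \<in> portal X AxX w" "betw (fst w) (fst p) c" shows "(c, snd w) \<in> X"
proof -
  have "(\<lambda>p q. p \<in> X \<and> q \<in> X \<and> adj_ax AxX p q)\<^sup>*\<^sup>* w p" using assms(2) portal_def by auto
  then show ?thesis using assms(3)
  proof (induction arbitrary: c rule: rtranclp_induct)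
    case base then show ?case using assms(1) by (cases w) (auto simp: betw_def)
  next
    case (step y z)
    have "snd y = snd w" using portal_inv[OF step.hyps(1)] by simp
    have z: "snd z = snd y \<and> (fst z = fst y + 1 \<or> fst z = fst y - 1)"
      using step.hyps(2) unfolding adj_ax_def nplus_def by (cases y, cases z) auto
    show ?case
    proof (cases "betw (fst w) (fst y) c")
      case True
      then show ?thesis using step.IH by blast
    next
      case False
      then have "c = fst z" using step.prems z unfolding betw_def by auto
      then have "(c, snd w) = z" using z \<open>snd y = snd w\<close> by (cases z) auto
      then show ?thesis using step.hyps(2) by simp
    qed
  qed
qed

lemma row_path:
  assumes "\<forall>c. betw x1 x2 c \<longrightarrow> (c, b) \<in> X"
  shows "(adj_in X ^^ nat \<bar>x1 - x2\<bar>) (x1, b) (x2, b)"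
  using assms
proof (induction "nat \<bar>x1 - x2\<bar>" arbitrary: x2)
  case 0 then show ?case by simp
next
  case (Suc n)
  have ne: "x1 \<noteq> x2" using Suc.hyps(2) by auto
  define x3 where "x3 = x2 - sgn (x2 - x1)"
  have x3: "(x3 = x2 - 1 \<and> x1 < x2) \<or> (x3 = x2 + 1 \<and> x2 < x1)" using ne by (auto simp: x3_def sgn_if)
  have n: "n = nat \<bar>x1 - x3\<bar>" using Suc.hyps(2) x3 by auto
  have bt: "\<forall>c. betw x1 x3 c \<longrightarrow> (c, b) \<in> X"
  proof (intro allI impI)
    fix c assume "betw x1 x3 c"
    then have "betw x1 x2 c" using x3 unfolding betw_def by auto
    then show "(c, b) \<in> X" using Suc.prems by blast
  qed
  have "(adj_in X ^^ nat \<bar>x1 - x3\<bar>) (x1, b) (x3, b)"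
    using Suc.hyps(1)[OF n bt] .
  then have "(adj_in X ^^ n) (x1, b) (x3, b)" using n by simp
  moreover have "(x3, b) \<in> X" "(x2, b) \<in> X" using Suc.prems x3 unfolding betw_def by auto
  moreover have "adj_ax AxX (x3, b) (x2, b)"
  proof (cases "x3 = x2 - 1")
    case True
    then have "(x2, b) = nplus (x3, b) (dvec AxX)" by (simp add: nplus_def)
    then show ?thesis unfolding adj_ax_def by blast
  next
    case False
    then have "(x3, b) = nplus (x2, b) (dvec AxX)" using x3 by (simp add: nplus_def)
    then show ?thesis unfolding adj_ax_def by blast
  qed
  ultimately have "adj_in X (x3, b) (x2, b)" unfolding adj_in_def grid_adj_def by blast
  with \<open>(adj_in X ^^ n) (x1, b) (x3, b)\<close> have "(adj_in X ^^ Suc n) (x1, b) (x2, b)"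
    by (rule relpowp_Suc_I)
  then show ?case using Suc.hyps(2) by simp
qed

lemma tri_lo: "b \<le> b0 \<Longrightarrow> tri b0 (a,b) = {(a',b'). b \<le> b' \<and> b' \<le> b0 \<and> a+b-b' \<le> a' \<and> a' \<le> a}"
  unfolding tri_def by (auto simp: min_def max_def)

lemma tri_hi: "b0 \<le> b \<Longrightarrow> tri b0 (a,b) = {(a',b'). b0 \<le> b' \<and> b' \<le> b \<and> a \<le> a' \<and> a' \<le> a+b-b'}"
  unfolding tri_def by (auto simp: min_def max_def)

lemma tri_base: "betw (fst v) (fst v + snd v - b0) c \<Longrightarrow> (c, b0) \<in> tri b0 v"
  by (cases v; cases "snd v \<le> b0") (auto simp: tri_lo tri_hi betw_def)

lemma tri_self: "v \<in> tri b0 v"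
  by (cases v; cases "snd v \<le> b0") (auto simp: tri_lo tri_hi)

lemma sub_lo: assumes "b < b0" "a' = a - 1 \<or> a' = a" shows "tri b0 (a', b + 1) \<subseteq> tri b0 (a, b)"
proof -
  have e1: "tri b0 (a', b + 1) = {(x,y). b + 1 \<le> y \<and> y \<le> b0 \<and> a'+(b+1)-y \<le> x \<and> x \<le> a'}"
    using assms(1) by (intro tri_lo) simp
  have e2: "tri b0 (a, b) = {(x,y). b \<le> y \<and> y \<le> b0 \<and> a+b-y \<le> x \<and> x \<le> a}"
    using assms(1) by (intro tri_lo) simp
  show ?thesis unfolding e1 e2 using assms(2) by auto
qed

lemma sub_hi: assumes "b0 < b" "a' = a + 1 \<or> a' = a" shows "tri b0 (a', b - 1) \<subseteq> tri b0 (a, b)"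
proof -
  have e1: "tri b0 (a', b - 1) = {(x,y). b0 \<le> y \<and> y \<le> b - 1 \<and> a' \<le> x \<and> x \<le> a'+(b-1)-y}"
    using assms(1) by (intro tri_hi) simp
  have e2: "tri b0 (a, b) = {(x,y). b0 \<le> y \<and> y \<le> b \<and> a \<le> x \<and> x \<le> a+b-y}"
    using assms(1) by (intro tri_hi) simp
  show ?thesis unfolding e1 e2 using assms(2) by auto
qed

lemma adjZ: "adj_ax AxZ (a, b) (a - 1, b + 1)" by (simp add: adj_ax_def nplus_def)
lemma adjY: "adj_ax AxY (a, b) (a, b + 1)" by (simp add: adj_ax_def nplus_def)
lemma adj_g: "adj_ax d x y \<Longrightarrow> grid_adj x y \<and> grid_adj y x"
  unfolding grid_adj_def adj_ax_def by blast

lemma tri_step: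
  assumes "b \<noteq> b0" "betw a (a + b - b0) c"
  shows "\<exists>v'. nat \<bar>snd v' - b0\<bar> = nat \<bar>b - b0\<bar> - 1 \<and> betw (fst v') (fst v' + snd v' - b0) c
     \<and> tri b0 v' \<subseteq> tri b0 (a, b) \<and> grid_adj v' (a, b)"
proof (cases "b < b0")
  case True
  show ?thesis
  proof (cases "c = a")
    case True
    have "grid_adj (a, b + 1) (a, b)" using adj_g[OF adjY[of a b]] by blast
    then show ?thesis using \<open>b < b0\<close> True assms(2) sub_lo[of b b0 a a]
      by (intro exI[of _ "(a, b + 1)"]) (auto simp: betw_def)
  next
    case False
    have "grid_adj (a - 1, b + 1) (a, b)" using adj_g[OF adjZ[of a b]] by blast
    then show ?thesis using \<open>b < b0\<close> False assms(2) sub_lo[of b b0 "a - 1" a]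
      by (intro exI[of _ "(a - 1, b + 1)"]) (auto simp: betw_def)
  qed
next
  case False
  then have lt: "b0 < b" using assms(1) by simp
  show ?thesis
  proof (cases "c = a")
    case True
    have "grid_adj (a, b - 1) (a, b)" using adj_g[OF adjY[of a "b - 1"]] by simp
    then show ?thesis using lt True assms(2) sub_hi[of b0 b a a]
      by (intro exI[of _ "(a, b - 1)"]) (auto simp: betw_def)
  next
    case False
    have "grid_adj (a + 1, b - 1) (a, b)" using adj_g[OF adjZ[of "a + 1" "b - 1"]] by simp
    then show ?thesis using lt False assms(2) sub_hi[of b0 b "a + 1" a]
      by (intro exI[of _ "(a + 1, b - 1)"]) (auto simp: betw_def)
  qed
qed

lemma tri_path:
  "nat \<bar>snd v - b0\<bar> = n \<Longrightarrow> betw (fst v) (fst v + snd v - b0) c \<Longrightarrow> tri b0 v \<subseteq> X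
   \<Longrightarrow> (adj_in X ^^ n) (c, b0) v"
proof (induction n arbitrary: v)
  case 0
  obtain a b where v: "v = (a, b)" by (cases v)
  then have "b = b0" using 0 by simp
  then have "c = a" using 0(2) v by (simp add: betw_def)
  then show ?case using v \<open>b = b0\<close> by simp
next
  case (Suc m)
  obtain a b where v: "v = (a, b)" by (cases v)
  have bb: "b \<noteq> b0" using Suc.prems(1) v by auto
  have "\<exists>v'. nat \<bar>snd v' - b0\<bar> = nat \<bar>b - b0\<bar> - 1 \<and> betw (fst v') (fst v' + snd v' - b0) c
     \<and> tri b0 v' \<subseteq> tri b0 (a, b) \<and> grid_adj v' (a, b)"
    using tri_step[OF bb] Suc.prems(2) v by simp
  then obtain v' where v': "nat \<bar>snd v' - b0\<bar> = nat \<bar>b - b0\<bar> - 1" "betw (fst v') (fst v' + snd v' - b0) c"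
     "tri b0 v' \<subseteq> tri b0 (a, b)" "grid_adj v' (a, b)"
    by blast
  have h1: "nat \<bar>snd v' - b0\<bar> = m" using v'(1) Suc.prems(1) v by simp
  have "(adj_in X ^^ m) (c, b0) v'" using Suc.IH[OF h1 v'(2)] v'(3) Suc.prems(3) v by blast
  moreover have "v' \<in> X" "v \<in> X" using v'(3) tri_self Suc.prems(3) v by blast+
  ultimately have "(adj_in X ^^ m) (c, b0) v'" "adj_in X v' v"
    using v'(4) v unfolding adj_in_def by auto
  then show ?case by (rule relpowp_Suc_I)
qed

lemma reach_in: "(adj_in Y)\<^sup>*\<^sup>* c v \<Longrightarrow> c \<in> Y \<Longrightarrow> v \<in> Y"
  by (induction rule: rtranclp_induct) (auto simp: adj_in_def)

lemma sideA_sub: "side_A X P b0 \<sigma> \<subseteq> X - P"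
  unfolding side_A_def using reach_in by blast

lemma sideA_closed:
  assumes "m \<in> side_A X P b0 \<sigma>" "v \<in> X - P" "grid_adj m v" shows "v \<in> side_A X P b0 \<sigma>"
proof -
  have "m \<in> X - P" using assms(1) sideA_sub by blast
  then have "adj_in (X - P) m v" using assms by (simp add: adj_in_def)
  then show ?thesis using assms(1) unfolding side_A_def
    by (blast intro: rtranclp.rtrancl_into_rtrancl)
qed

lemma crossing:
  assumes "(adj_in X ^^ n) s v" "s \<in> A \<union> P" "v \<notin> A \<union> P" "A \<subseteq> X - P"
    "\<And>m v. m \<in> A \<Longrightarrow> v \<in> X - P \<Longrightarrow> grid_adj m v \<Longrightarrow> v \<in> A"
  shows "\<exists>p\<in>P. \<exists>k\<le>n. (adj_in X ^^ k) s p \<and> (adj_in X ^^ (n - k)) p v"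
  using assms(1,3)
proof (induction n arbitrary: v)
  case 0 then show ?case using assms(2) by auto
next
  case (Suc n)
  obtain m where m: "(adj_in X ^^ n) s m" "adj_in X m v" using Suc.prems(1) by (auto elim: relpowp_Suc_E)
  show ?case
  proof (cases "m \<in> P")
    case True
    then show ?thesis using m by (intro bexI[of _ m] exI[of _ n]) auto
  next
    case False
    have "m \<notin> A"
    proof
      assume "m \<in> A"
      then have "v \<in> A" using assms(5)[of m v] m(2) Suc.prems(2) by (auto simp: adj_in_def)
      then show False using Suc.prems(2) by blast
    qed
    then obtain p k where "p \<in> P" "k \<le> n" "(adj_in X ^^ k) s p" "(adj_in X ^^ (n - k)) p m"
      using Suc.IH[OF m(1)] False by blast
    moreover have "(adj_in X ^^ Suc (n - k)) p v" using calculation(4) m(2) by (rule relpowp_Suc_I)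
    ultimately show ?thesis by (intro bexI[of _ p] exI[of _ k]) (auto simp: Suc_diff_le)
  qed
qed


lemma clamp_betw: "betw a e (max (min a e) (min (max a e) t))"
  unfolding betw_def by linarith

lemma clamp_eq: assumes "b \<noteq> (b0::int)"
  shows "\<bar>t - a\<bar> + \<bar>b0 - b\<bar> + \<bar>t - a + b0 - b\<bar> = 2 * \<bar>b - b0\<bar> + 2 * \<bar>t - max (min a (a + b - b0)) (min (max a (a + b - b0)) t)\<bar>"
proof (cases "b < b0")
  case True
  then have m: "min a (a + b - b0) = a + b - b0" "max a (a + b - b0) = a" by auto
  show ?thesis unfolding m using True
    by (cases "t \<le> a + b - b0"; cases "t \<le> a") (auto simp: abs_if min_def max_def)
next
  case False
  then have m: "min a (a + b - b0) = a" "max a (a + b - b0) = a + b - b0" using assms by auto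
  show ?thesis unfolding m using False assms
    by (cases "t \<le> a + b - b0"; cases "t \<le> a") (auto simp: abs_if min_def max_def)
qed

lemma clamp_seg: assumes "betw t (max (min a e) (min (max a e) t)) c'" "\<not> betw a e c'" "a0 = a \<or> a0 = e"
  shows "betw t a0 c'"
  using assms unfolding betw_def by linarith

lemma tri_nz: assumes "b \<noteq> b0" shows "tri b0 (a - sgn (b0 - b), b + sgn (b0 - b)) \<subseteq> tri b0 (a, b)"
proof (cases "b < b0")
  case True then show ?thesis using sub_lo[of b b0 "a - 1" a] by simp
next
  case False then have "b0 < b" using assms by simp
  then show ?thesis using sub_hi[of b0 b "a + 1" a] by simp
qed

lemma tri_ny: assumes "b \<noteq> b0" shows "tri b0 (a, b + sgn (b0 - b)) \<subseteq> tri b0 (a, b)"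
proof (cases "b < b0")
  case True then show ?thesis using sub_lo[of b b0 a a] by simp
next
  case False then have "b0 < b" using assms by simp
  then show ?thesis using sub_hi[of b0 b a a] by simp
qed


theorem mainTheorem19:
  fixes X P S :: "node set" and w u :: node and \<sigma> :: int
  assumes "finite X"
    and "connected_set X"
    and "no_holes X"
    and "w \<in> X" and "P = portal X AxX w"
    and "\<sigma> \<in> {1, -1}"
    and "S \<subseteq> side_A X P (snd w) \<sigma> \<union> P" and "S \<noteq> {}"
    and "u \<in> side_B X P (snd w) \<sigma> \<inter> vis X P"
    and "tri (snd w) u \<subseteq> X"
  shows "(gdist_set X S (proj_z (snd w) u) \<le> gdist_set X S (proj_y (snd w) u)
            \<longrightarrow> feasible_parent X S u (nb_z (snd w) u))
       \<and> (gdist_set X S (proj_z (snd w) u) \<ge> gdist_set X S (proj_y (snd w) u)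
            \<longrightarrow> feasible_parent X S u (nb_y (snd w) u))"
proof -
  define b0 where "b0 = snd w"
  define A where "A = side_A X P b0 \<sigma>"
  obtain a b where u: "u = (a, b)" by (cases u)
  have conn: "connected_set X" by fact
  have PX: "P \<subseteq> X" using assms(4,5) portal_sub by blast
  have AX: "A \<subseteq> X - P" unfolding A_def by (rule sideA_sub)
  have Acl: "\<And>m v. m \<in> A \<Longrightarrow> v \<in> X - P \<Longrightarrow> grid_adj m v \<Longrightarrow> v \<in> A"
    unfolding A_def by (rule sideA_closed)
  have u9: "u \<in> X - (P \<union> A)" using assms(9) unfolding side_B_def A_def b0_def by blast
  then have uB: "u \<in> X" "u \<notin> P" "u \<notin> A" by auto
  have SX: "S \<subseteq> X" using assms(7) AX PX unfolding A_def b0_def by blast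
  have finS: "finite S" using SX assms(1) finite_subset by blast
  have wP: "\<And>p. p \<in> P \<Longrightarrow> (\<lambda>p q. p \<in> X \<and> q \<in> X \<and> adj_ax AxX p q)\<^sup>*\<^sup>* w p"
  proof -
    fix p assume "p \<in> P"
    then show "(\<lambda>p q. p \<in> X \<and> q \<in> X \<and> adj_ax AxX p q)\<^sup>*\<^sup>* w p"
      unfolding assms(5) portal_def by (rule CollectD)
  qed
  have Prow: "\<And>p. p \<in> P \<Longrightarrow> snd p = b0"
  proof -
    fix p assume "p \<in> P"
    from portal_inv[OF wP[OF this]] show "snd p = b0" unfolding b0_def by simp
  qed
  obtain a0 where a0: "a0 = a \<or> a0 = a + b - b0" "(a0, b0) \<in> P" and bb: "b \<noteq> b0"
  proof -
    obtain p where "p \<in> P" "u \<in> portal X AxX p \<union> portal X AxY p \<union> portal X AxZ p"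
      using assms(9) unfolding vis_def by blast
    then obtain d where p: "p \<in> P" "u \<in> portal X d p" by blast
    have pr: "(\<lambda>p q. p \<in> X \<and> q \<in> X \<and> adj_ax d p q)\<^sup>*\<^sup>* p u" using p(2) unfolding portal_def by auto
    note inv = portal_inv[OF pr]
    have "snd p = b0" using Prow p(1) .
    show ?thesis
    proof (cases d)
      case AxX
      then have "(\<lambda>p q. p \<in> X \<and> q \<in> X \<and> adj_ax AxX p q)\<^sup>*\<^sup>* w u"
        using rtranclp_trans[OF wP[OF p(1)]] pr by simp
      then have "u \<in> P" unfolding assms(5) portal_def by simp
      then show ?thesis using uB by blast
    next
      case AxY
      then have "p = (a, b0)" using inv \<open>snd p = b0\<close> u by (cases p) auto
      moreover have "b \<noteq> b0" using \<open>p = (a, b0)\<close> p(1) uB u by auto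
      ultimately show ?thesis using that p(1) by auto
    next
      case AxZ
      then have "p = (a + b - b0, b0)" using inv \<open>snd p = b0\<close> u by (cases p) auto
      moreover have "b \<noteq> b0" using \<open>p = (a + b - b0, b0)\<close> p(1) uB u by auto
      ultimately show ?thesis using that p(1) by auto
    qed
  qed
  have triX: "tri b0 u \<subseteq> X" using assms(10) b0_def by simp
  define h where "h = nat \<bar>b - b0\<bar>"
  have LB: "\<exists>c. betw a (a + b - b0) c \<and> gdist_set X S (c, b0) + h \<le> gdist_set X S u"
  proof -
    obtain s0 where s0: "s0 \<in> S" "gdist_set X S u = gdist X s0 u" using gset_attain finS assms(8) by blast
    define n where "n = gdist X s0 u"
    have path: "(adj_in X ^^ n) s0 u" unfolding n_def using gdist_path[OF conn] s0 SX uB by blast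
    obtain p k where pk: "p \<in> P" "k \<le> n" "(adj_in X ^^ k) s0 p" "(adj_in X ^^ (n - k)) p u"
    proof -
      have sA: "s0 \<in> A \<union> P" using assms(7) s0(1) unfolding A_def b0_def by blast
      have uA: "u \<notin> A \<union> P" using uB by blast
      have cr: "\<exists>p\<in>P. \<exists>k\<le>n. (adj_in X ^^ k) s0 p \<and> (adj_in X ^^ (n - k)) p u"
        apply (rule crossing[OF path sA uA AX])
        using Acl by blast
      show ?thesis using cr that by blast
    qed
    have gp: "gdist_set X S p \<le> k"
      using gset_min[OF finS s0(1)] gdist_le[OF pk(3)] by (meson order_trans)
    have gd: "gd2 p u \<le> 2 * int (n - k)" using gd2_path[OF pk(4)] .
    obtain t where pt: "p = (t, b0)" using Prow[OF pk(1)] by (cases p) auto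
    define c where "c = max (min a (a + b - b0)) (min (max a (a + b - b0)) t)"
    have cb: "betw a (a + b - b0) c" unfolding c_def by (rule clamp_betw)
    have seg: "\<forall>c'. betw t c c' \<longrightarrow> (c', b0) \<in> X"
    proof (intro allI impI)
      fix c' assume c': "betw t c c'"
      show "(c', b0) \<in> X"
      proof (cases "betw a (a + b - b0) c'")
        case True
        then show ?thesis using tri_base[of u b0 c'] triX u by auto
      next
        case False
        then have "betw t a0 c'" using c' a0(1) clamp_seg unfolding c_def by blast
        then have "betw (fst w) t c' \<or> betw (fst w) a0 c'" unfolding betw_def by auto
        then show ?thesis
          using portal_interval[OF assms(4), of p c'] portal_interval[OF assms(4), of "(a0, b0)" c']
            pk(1) a0(2) assms(5) pt b0_def by auto
      qed
    qed
    have rp: "(adj_in X ^^ nat \<bar>t - c\<bar>) p (c, b0)" using row_path[OF seg] pt by simp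
    have gc: "gdist_set X S (c, b0) \<le> gdist_set X S p + nat \<bar>t - c\<bar>"
      using gset_step[OF finS assms(8) SX conn _ rp] pk(1) PX by blast
    have eq: "gd2 p u = 2 * \<bar>b - b0\<bar> + 2 * \<bar>t - c\<bar>"
      unfolding gd2_def pt u c_def fst_conv snd_conv by (rule clamp_eq[OF bb])
    have "int h + int (nat \<bar>t - c\<bar>) \<le> int (n - k)" using gd eq unfolding h_def by simp
    then have "gdist_set X S (c, b0) + h \<le> n" using gc gp pk(2) by linarith
    then show ?thesis using cb s0 n_def by auto
  qed
  have UB: "\<And>v' c. tri b0 v' \<subseteq> X \<Longrightarrow> betw (fst v') (fst v' + snd v' - b0) c \<Longrightarrow>
      gdist_set X S v' \<le> gdist_set X S (c, b0) + nat \<bar>snd v' - b0\<bar>"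
  proof -
    fix v' c assume t: "tri b0 v' \<subseteq> X" and bc: "betw (fst v') (fst v' + snd v' - b0) c"
    have "(adj_in X ^^ nat \<bar>snd v' - b0\<bar>) (c, b0) v'" using tri_path[OF refl bc t] .
    moreover have "(c, b0) \<in> X" using tri_base[OF bc] t by blast
    ultimately show "gdist_set X S v' \<le> gdist_set X S (c, b0) + nat \<bar>snd v' - b0\<bar>"
      using gset_step[OF finS assms(8) SX conn] by blast
  qed
  have FP: "\<And>v'. v' \<in> X \<Longrightarrow> adj_ax d u v' \<Longrightarrow> gdist_set X S v' + 1 \<le> gdist_set X S u \<Longrightarrow>
      feasible_parent X S u v'" for d
  proof -
    fix v' assume v': "v' \<in> X" "adj_ax d u v'" "gdist_set X S v' + 1 \<le> gdist_set X S u"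
    have ga: "grid_adj u v'" "grid_adj v' u" using v'(2) unfolding grid_adj_def adj_ax_def by blast+
    have "adj_in X v' u" using ga v' uB by (simp add: adj_in_def)
    then have "(adj_in X ^^ 1) v' u" by (simp only: relpowp_1)
    then have "gdist_set X S u \<le> gdist_set X S v' + 1" using gset_step[OF finS assms(8) SX conn v'(1)] by blast
    then show "feasible_parent X S u v'" unfolding feasible_parent_def using v' ga by auto
  qed
  obtain c where c: "betw a (a + b - b0) c" "gdist_set X S (c, b0) + h \<le> gdist_set X S u" using LB by blast
  define s where "s = sgn (b0 - b)"
  have ss: "(s = 1 \<and> b < b0) \<or> (s = -1 \<and> b0 < b)" using bb unfolding s_def by (auto simp: sgn_if)
  have hpos: "h \<ge> 1" using bb h_def by auto
  have part1: "gdist_set X S (a + b - b0, b0) \<le> gdist_set X S (a, b0) \<Longrightarrow>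
      feasible_parent X S u (a - s, b + s)"
  proof -
    assume hz: "gdist_set X S (a + b - b0, b0) \<le> gdist_set X S (a, b0)"
    define v' where "v' = (a - s, b + s)"
    have tv: "tri b0 v' \<subseteq> X" using triX tri_nz[OF bb, of a] u unfolding v'_def s_def by blast
    have vX: "v' \<in> X" using tv tri_self by blast
    have hv: "nat \<bar>snd v' - b0\<bar> = h - 1" using ss unfolding v'_def h_def by auto
    have adj: "adj_ax AxZ u v'" using ss u unfolding v'_def by (auto simp: adj_ax_def nplus_def)
    have "\<exists>c'. betw (fst v') (fst v' + snd v' - b0) c' \<and> gdist_set X S (c', b0) \<le> gdist_set X S (c, b0)"
    proof (cases "c = a")
      case True
      then show ?thesis using hz unfolding v'_def betw_def by (intro exI[of _ "a + b - b0"]) auto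
    next
      case False
      then show ?thesis using c(1) ss unfolding v'_def betw_def by (intro exI[of _ c]) auto
    qed
    then obtain c' where "betw (fst v') (fst v' + snd v' - b0) c'" "gdist_set X S (c', b0) \<le> gdist_set X S (c, b0)" by blast
    then have "gdist_set X S v' + 1 \<le> gdist_set X S u" using UB[OF tv] hv c(2) hpos by fastforce
    then show ?thesis using FP[OF vX adj] v'_def by simp
  qed
  have part2: "gdist_set X S (a, b0) \<le> gdist_set X S (a + b - b0, b0) \<Longrightarrow>
      feasible_parent X S u (a, b + s)"
  proof -
    assume hz: "gdist_set X S (a, b0) \<le> gdist_set X S (a + b - b0, b0)"
    define v' where "v' = (a, b + s)"
    have tv: "tri b0 v' \<subseteq> X" using triX tri_ny[OF bb, of a] u unfolding v'_def s_def by blast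
    have vX: "v' \<in> X" using tv tri_self by blast
    have hv: "nat \<bar>snd v' - b0\<bar> = h - 1" using ss unfolding v'_def h_def by auto
    have adj: "adj_ax AxY u v'" using ss u unfolding v'_def by (auto simp: adj_ax_def nplus_def)
    have "\<exists>c'. betw (fst v') (fst v' + snd v' - b0) c' \<and> gdist_set X S (c', b0) \<le> gdist_set X S (c, b0)"
    proof (cases "c = a + b - b0")
      case True
      then show ?thesis using hz unfolding v'_def betw_def by (intro exI[of _ a]) auto
    next
      case False
      then show ?thesis using c(1) ss unfolding v'_def betw_def by (intro exI[of _ c]) auto
    qed
    then obtain c' where "betw (fst v') (fst v' + snd v' - b0) c'" "gdist_set X S (c', b0) \<le> gdist_set X S (c, b0)" by blast
    then have "gdist_set X S v' + 1 \<le> gdist_set X S u" using UB[OF tv] hv c(2) hpos by fastforce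
    then show ?thesis using FP[OF vX adj] v'_def by simp
  qed
  show ?thesis using part1 part2 u
    unfolding proj_z_def proj_y_def nb_z_def nb_y_def b0_def[symmetric] s_def by simp
qed

end
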